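(* Let $n\ge1$ and $\pi\in\mathfrak B_n$ with $\pi_1>0$ (resp. $\pi_1<0$). Then $\mathrm{run}_B(\sigma)\ge\mathrm{leaf}(T_\pi)$ for every $T_\sigma\in\mathrm{Orb}^*(T_\pi)$, and there is a unique tree $T_{\pi^*}\in\mathrm{Orb}^*(T_\pi)$, with $\pi^*_1>0$ (resp. $\pi^*_1<0$), such that $\mathrm{run}_B(\pi^* )=\mathrm{leaf}(T_\pi)$.
   Context: $\mathfrak B_n$ is the set of signed permutations $\pi=\pi_1\cdots\pi_n$ (words over $\{\pm1,\dots,\pm n\}$ with $|\pi_1|,\dots,|\pi_n|$ a permutation of $[n]$), compared as integers; set $\pi_0=0$. $\mathrm{run}_B(\pi)$ is $1$ plus the number of $i\in\{1,\dots,n-1\}$ with $\pi_{i-1}<\pi_i>\pi_{i+1}$ or $\pi_{i-1}>\pi_i<\pi_{i+1}$. Trees are rooted binary trees with each child designated left or right. A min–max tree is labeled bijectively by a totally ordered set so that each node's label is the minimum or maximum of its subtree's labels. A node with a child is inner; an inner node is a min-node (resp. max-node) if its label is the minimum (resp. maximum) of its subtree. An HR-tree is a min–max tree in which every inner node $s$ has a nonempty right subtree containing the maximum label of the subtree of $s$ if $s$ is a min-node, the minimum if $s$ is a max-node. The reading word is the in-order reading $w(T)=w(L)\,\ell_{\mathrm{root}}\,w(R)$. $\mathcal{BHR}_n$ is the set of HR-trees with label set $\{0,s_1,\dots,s_n\}$, $s_i\in\{i,-i\}$, with $0$ the first letter of $w(T)$; $T\mapsto w(T)=0\pi_1\cdots\pi_n$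 is a bijection $\mathcal{BHR}_n\to\mathfrak B_n$ and $T_\pi$ is the tree with $w(T_\pi)=0\pi$. $\mathrm{leaf}(T)$ is the number of leaves of $T$ (the node $0$ included if it is a leaf). Modified HR-action: for $i\in[n]$ and $T_\pi\in\mathcal{BHR}_n$, let $v$ be the node labeled $\pi_i$. If $v$ is a leaf, or if the node labeled $0$ is a leaf whose parent is $v$, then $\widehat\psi_i(T_\pi)=T_\pi$. Otherwise let $R$ consist of $\pi_i$ and the labels of the right subtree of $v$; relabel $v$ and its right subtree, keeping the shape, so that $v$ receives $\max R$ if $v$ is a min-node and $\min R$ if $v$ is a max-node, the right subtree nodes receiving the remaining elements of $R$ by the order-preserving bijection from their old labels; other labels unchanged. The $\widehat\psi_i$ are commuting involutions and $\mathrm{Orb}^*(T)$ is the set of trees obtained from $T$ by compositions of the $\widehat\psi_i$, $i\in[n]$. *)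

theory Defs
  imports Main "HOL-Library.Tree"
begin

(* Trees: HOL-Library binary trees; Leaf is the empty tree, a node is Node l x r.
   A node of the paper is a "leaf" iff it is Node Leaf x Leaf. Labels are integers. *)

definition signed_perm :: "nat \<Rightarrow> int list \<Rightarrow> bool" where
  "signed_perm n \<pi> \<longleftrightarrow> distinct (map abs \<pi>) \<and> set (map abs \<pi>) = {1..int n}"

(* run_B(pi): with pi_0 = 0, w = 0 # pi, so w ! i = pi_i *)
definition runB :: "int list \<Rightarrow> nat" where
  "runB \<pi> = (let w = 0 # \<pi>; n = length \<pi> in
     1 + card {i \<in> {1..n-1}. (w!(i-1) < w!i \<and> w!i > w!(i+1)) \<or> (w!(i-1) > w!i \<and> w!i < w!(i+1))})"

fun leaf_count :: "'a tree \<Rightarrow> nat" where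
  "leaf_count Leaf = 0"
| "leaf_count (Node l x r) = (if l = Leaf \<and> r = Leaf then 1 else leaf_count l + leaf_count r)"

fun minmax_nodes :: "int tree \<Rightarrow> bool" where
  "minmax_nodes Leaf = True"
| "minmax_nodes (Node l x r) =
     ((x = Min (set_tree (Node l x r)) \<or> x = Max (set_tree (Node l x r)))
      \<and> minmax_nodes l \<and> minmax_nodes r)"

definition minmax_tree :: "int tree \<Rightarrow> bool" where
  "minmax_tree t \<longleftrightarrow> distinct (inorder t) \<and> minmax_nodes t"

fun hr_nodes :: "int tree \<Rightarrow> bool" where
  "hr_nodes Leaf = True"
| "hr_nodes (Node l x r) =
     ((((l \<noteq> Leaf \<or> r \<noteq> Leaf) \<longrightarrow>
        r \<noteq> Leaf
        \<and> (x = Min (set_tree (Node l x r)) \<longrightarrow> Max (set_tree (Node l x r)) \<in> set_tree r)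
        \<and> (x = Max (set_tree (Node l x r)) \<longrightarrow> Min (set_tree (Node l x r)) \<in> set_tree r)))
     \<and> hr_nodes l \<and> hr_nodes r)"

definition hr_tree :: "int tree \<Rightarrow> bool" where
  "hr_tree t \<longleftrightarrow> minmax_tree t \<and> hr_nodes t"

definition relabel_node :: "int tree \<Rightarrow> int \<Rightarrow> int tree \<Rightarrow> int tree" where
  "relabel_node l y r =
     (let R = insert y (set_tree r);
          y' = (if y = Min (set_tree (Node l y r)) then Max R else Min R);
          new = sorted_list_of_set (R - {y'});
          f = (\<lambda>z. new ! card {w \<in> set_tree r. w < z})
      in Node l y' (map_tree f r))"

fun psi_at :: "int \<Rightarrow> int tree \<Rightarrow> int tree" where
  "psi_at x Leaf = Leaf"
| "psi_at x (Node l y r) =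
     (if y = x then
        (if (l = Leaf \<and> r = Leaf) \<or> l = Node Leaf 0 Leaf \<or> r = Node Leaf 0 Leaf
         then Node l y r else relabel_node l y r)
      else Node (psi_at x l) y (psi_at x r))"

(* psi_i (T_pi) with w(T_pi) = 0 pi, i in [n] *)
definition psi :: "nat \<Rightarrow> int tree \<Rightarrow> int tree" where
  "psi i t = psi_at (tl (inorder t) ! (i - 1)) t"

inductive_set orb :: "nat \<Rightarrow> int tree \<Rightarrow> int tree set" for n T where
  base: "T \<in> orb n T"
| step: "S \<in> orb n T \<Longrightarrow> i \<in> {1..n} \<Longrightarrow> psi i S \<in> orb n T"

end

theory Submission
  imports Defs
begin


fun dirs :: "int list \<Rightarrow> bool list" where
  "dirs (a # b # rest) = (a < b) # dirs (b # rest)"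
| "dirs _ = []"

fun chg :: "bool list \<Rightarrow> nat" where
  "chg (a # b # rest) = (if a \<noteq> b then 1 else 0) + chg (b # rest)"
| "chg _ = 0"

definition turnP :: "int list \<Rightarrow> nat \<Rightarrow> bool" where
  "turnP w i = ((w!(i-1) < w!i \<and> w!i > w!(i+1)) \<or> (w!(i-1) > w!i \<and> w!i < w!(i+1)))"

lemma card_turn:
  "distinct w \<Longrightarrow> card {i \<in> {1..length w - 2}. turnP w i} = chg (dirs w)"
proof (induction w rule: dirs.induct)
  case (1 a b rest)
  show ?case
  proof (cases rest)
    case Nil
    then show ?thesis by simp
  next
    case (Cons c rest')
    let ?w = "a # b # rest"
    let ?w' = "b # rest"
    have IH: "card {i \<in> {1..length ?w' - 2}. turnP ?w' i} = chg (dirs ?w')"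
      using 1 by simp
    have sh: "turnP ?w (Suc i) = turnP ?w' i" if "i \<ge> 1" for i
      using that by (cases i) (auto simp: turnP_def)
    have eq: "{i \<in> {1..length ?w - 2}. turnP ?w i} =
       (if turnP ?w 1 then {1} else {}) \<union> Suc ` {i \<in> {1..length ?w' - 2}. turnP ?w' i}"
    proof (rule set_eqI)
      fix j
      show "j \<in> {i \<in> {1..length ?w - 2}. turnP ?w i} \<longleftrightarrow>
        j \<in> (if turnP ?w 1 then {1} else {}) \<union> Suc ` {i \<in> {1..length ?w' - 2}. turnP ?w' i}"
      proof (cases "j \<le> 1")
        case True then show ?thesis by (cases j) (auto simp: Cons)
      next
        case False
        then obtain i where j: "j = Suc i" "i \<ge> 1" by (cases j) auto
        then show ?thesis using sh[of i] False by (auto simp: Cons)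
      qed
    qed
    have t1: "turnP ?w 1 = ((a < b) \<noteq> (b < c))"
      using "1.prems" by (auto simp: turnP_def Cons)
    have "card {i \<in> {1..length ?w - 2}. turnP ?w i} =
       (if turnP ?w 1 then 1 else 0) + card {i \<in> {1..length ?w' - 2}. turnP ?w' i}"
      unfolding eq by (subst card_Un_disjoint) (auto simp: card_image)
    then show ?thesis using IH t1 by (simp add: Cons)
  qed
qed auto

lemma runB_chg: "distinct (0 # \<pi>) \<Longrightarrow> runB \<pi> = 1 + chg (dirs (0 # \<pi>))"
proof -
  assume d: "distinct (0 # \<pi>)"
  have "runB \<pi> = 1 + card {i \<in> {1..length (0#\<pi>) - 2}. turnP (0#\<pi>) i}"
    unfolding runB_def turnP_def Let_def by simp
  then show ?thesis using card_turn[OF d] by simp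
qed

lemma chg_append:
  "chg (xs @ ys) = chg xs + chg ys + (if xs \<noteq> [] \<and> ys \<noteq> [] \<and> last xs \<noteq> hd ys then 1 else 0)"
proof (induction xs rule: chg.induct)
  case ("2_2" a) then show ?case by (cases ys) auto
qed (auto split: list.splits)

lemma dirs_mid:
  "dirs (u @ x # v) = (if u = [] then [] else dirs u @ [last u < x]) @ (if v = [] then [] else (x < hd v) # dirs v)"
proof (induction u rule: dirs.induct)
  case (1 a b rest) then show ?case by simp
next
  case ("2_1") then show ?case by (cases v) auto
next
  case ("2_2" a) then show ?case by (cases v) auto
qed



fun Dty :: "bool tree \<Rightarrow> bool list" where
  "Dty Leaf = []"
| "Dty (Node l m r) = (if l = Leaf then [] else Dty l @ [\<not> m]) @ (if r = Leaf then [] else m # Dty r)"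

fun wfB :: "bool tree \<Rightarrow> bool" where
  "wfB Leaf = True"
| "wfB (Node l m r) = (((l \<noteq> Leaf \<or> r \<noteq> Leaf) \<longrightarrow> r \<noteq> Leaf) \<and> (l = Leaf \<and> r = Leaf \<longrightarrow> m) \<and> wfB l \<and> wfB r)"

definition shp :: "'a tree \<Rightarrow> unit tree" where "shp t = map_tree (\<lambda>_. ()) t"

lemma shp_simps[simp]: "shp Leaf = Leaf" "shp (Node l x r) = Node (shp l) () (shp r)"
  by (auto simp: shp_def)

lemma shp_Leaf_iff[simp]: "shp t = Leaf \<longleftrightarrow> t = Leaf"
  by (cases t) auto

lemma shp_Leaf_iff2[simp]: "Leaf = shp t \<longleftrightarrow> t = Leaf"
  by (cases t) auto

lemma leaf_count_shp: "shp s = shp t \<Longrightarrow> leaf_count s = leaf_count t"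
proof (induction t arbitrary: s)
  case Leaf then show ?case by simp
next
  case (Node l x r) then show ?case by (cases s) auto
qed

lemma size_shp: "shp s = shp t \<Longrightarrow> size s = size t"
proof (induction t arbitrary: s)
  case Leaf then show ?case by simp
next
  case (Node l x r) then show ?case by (cases s) auto
qed

definition tightB :: "bool tree \<Rightarrow> bool" where
  "tightB t \<longleftrightarrow> chg (Dty t) + 1 = leaf_count t"

lemma Dty_nil_iff: "wfB t \<Longrightarrow> t \<noteq> Leaf \<Longrightarrow> Dty t = [] \<longleftrightarrow> (\<exists>m. t = Node Leaf m Leaf)"
  by (cases t) auto

lemma chg_cons: "chg (a # ys) = chg ys + (if ys \<noteq> [] \<and> a \<noteq> hd ys then 1 else 0)"
  using chg_append[of "[a]" ys] by simp

lemma B1: "wfB t \<Longrightarrow> t \<noteq> Leaf \<Longrightarrow> leaf_count t \<le> chg (Dty t) + 1"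
proof (induction t)
  case Leaf then show ?case by simp
next
  case (Node l m r)
  show ?case
  proof (cases "l = Leaf")
    case True
    then show ?thesis using Node by (cases "r = Leaf") (auto simp: chg_cons)
  next
    case False
    then have "r \<noteq> Leaf" using Node by auto
    then show ?thesis using Node False
      by (auto simp: chg_append chg_cons)
  qed
qed

lemma TN:
  assumes "wfB (Node l m r)" "r \<noteq> Leaf"
  shows "tightB (Node l m r) \<longleftrightarrow>
    (l \<noteq> Leaf \<longrightarrow> tightB l \<and> (Dty l = [] \<or> last (Dty l) = (\<not> m))) \<and> tightB r \<and> (Dty r = [] \<or> hd (Dty r) = m)"
proof (cases "l = Leaf")
  case True
  then show ?thesis using assms B1[of r]
    by (auto simp: tightB_def chg_cons)
next
  case False
  then show ?thesis using assms B1[of r] B1[of l]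
    by (auto simp: tightB_def chg_append chg_cons)
qed

lemma hd_Dty: "r \<noteq> Leaf \<Longrightarrow> hd (Dty (Node l m r)) = (if l = Leaf then m else if Dty l = [] then \<not> m else hd (Dty l))"
  by auto

lemma last_Dty: "wfB r \<Longrightarrow> r \<noteq> Leaf \<Longrightarrow> last (Dty (Node l m r)) = (if Dty r = [] then m else last (Dty r))"
  by auto

lemma B2:
  "wfB t1 \<Longrightarrow> wfB t2 \<Longrightarrow> shp t1 = shp t2 \<Longrightarrow> Dty t1 \<noteq> [] \<Longrightarrow> tightB t1 \<Longrightarrow> tightB t2
   \<Longrightarrow> hd (Dty t1) = hd (Dty t2) \<Longrightarrow> t1 = t2"
proof (induction t1 arbitrary: t2)
  case Leaf then show ?case by simp
next
  case (Node l1 m1 r1)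
  obtain l2 m2 r2 where t2: "t2 = Node l2 m2 r2" using Node.prems by (cases t2) auto
  have sl: "shp l1 = shp l2" and sr: "shp r1 = shp r2" using Node.prems t2 by auto
  have r1: "r1 \<noteq> Leaf" using Node.prems by auto
  then have r2: "r2 \<noteq> Leaf" using sr by auto
  have w: "wfB l1" "wfB r1" "wfB l2" "wfB r2" using Node.prems t2 by auto
  have T1: "(l1 \<noteq> Leaf \<longrightarrow> tightB l1 \<and> (Dty l1 = [] \<or> last (Dty l1) = (\<not> m1))) \<and> tightB r1 \<and> (Dty r1 = [] \<or> hd (Dty r1) = m1)"
    using TN[of l1 m1 r1] Node.prems r1 by auto
  have T2: "(l2 \<noteq> Leaf \<longrightarrow> tightB l2 \<and> (Dty l2 = [] \<or> last (Dty l2) = (\<not> m2))) \<and> tightB r2 \<and> (Dty r2 = [] \<or> hd (Dty r2) = m2)"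
    using TN[of l2 m2 r2] Node.prems r2 t2 by auto
  have hd: "hd (Dty (Node l1 m1 r1)) = hd (Dty (Node l2 m2 r2))" using Node.prems t2 by simp
  have Lleaf: "l1 = Leaf \<longleftrightarrow> l2 = Leaf" using sl by (metis shp_Leaf_iff)
  have "l1 = l2 \<and> m1 = m2"
  proof (cases "l1 = Leaf")
    case True
    then show ?thesis using hd Lleaf r1 r2 by (simp only: hd_Dty) auto
  next
    case False
    then have l2: "l2 \<noteq> Leaf" using Lleaf by auto
    show ?thesis
    proof (cases "Dty l1 = []")
      case True
      then obtain a where a: "l1 = Node Leaf a Leaf" using Dty_nil_iff[OF w(1) False] by auto
      then obtain b where b: "l2 = Node Leaf b Leaf" using sl by (cases l2) auto
      have "a" "b" using a b w by auto
      then show ?thesis using hd a b r1 r2 by (auto simp: hd_Dty)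
    next
      case False
      have False2: "Dty l2 \<noteq> []"
      proof
        assume "Dty l2 = []"
        then obtain b where b: "l2 = Node Leaf b Leaf" using Dty_nil_iff[OF w(3) l2] by auto
        then obtain a where a: "l1 = Node Leaf a Leaf" using sl by (cases l1) auto
        then show False using False by simp
      qed
      have "hd (Dty l1) = hd (Dty l2)" using hd r1 r2 \<open>l1 \<noteq> Leaf\<close> l2 False False2 hd_Dty[OF r1, of l1 m1] hd_Dty[OF r2, of l2 m2] by simp
      then have "l1 = l2" using Node.IH(1)[of l2] w sl False T1 T2 \<open>l1 \<noteq> Leaf\<close> l2 by auto
      then show ?thesis using T1 T2 False \<open>l1 \<noteq> Leaf\<close> by auto
    qed
  qed
  moreover have "r1 = r2"
  proof (cases "Dty r1 = []")
    case True
    then obtain a where a: "r1 = Node Leaf a Leaf" using Dty_nil_iff[OF w(2) r1] by auto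
    then obtain b where b: "r2 = Node Leaf b Leaf" using sr by (cases r2) auto
    show ?thesis using a b w by auto
  next
    case False
    have False2: "Dty r2 \<noteq> []"
    proof
      assume "Dty r2 = []"
      then obtain b where b: "r2 = Node Leaf b Leaf" using Dty_nil_iff[OF w(4) r2] by auto
      then obtain a where a: "r1 = Node Leaf a Leaf" using sr by (cases r1) auto
      then show False using False by simp
    qed
    show ?thesis using Node.IH(2)[of r2] w sr False False2 T1 T2 calculation by auto
  qed
  ultimately show ?case using t2 by simp
qed



definition smono :: "int set \<Rightarrow> (int \<Rightarrow> int) \<Rightarrow> bool" where
  "smono A f \<longleftrightarrow> (\<forall>a\<in>A. \<forall>b\<in>A. a < b \<longrightarrow> f a < f b)"

lemma smono_subset: "smono A f \<Longrightarrow> B \<subseteq> A \<Longrightarrow> smono B f"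
  by (auto simp: smono_def)

lemma smono_less_iff: "smono A f \<Longrightarrow> a \<in> A \<Longrightarrow> b \<in> A \<Longrightarrow> f a < f b \<longleftrightarrow> a < b"
  unfolding smono_def by (metis less_asym not_less_iff_gr_or_eq)

lemma smono_eq_iff: "smono A f \<Longrightarrow> a \<in> A \<Longrightarrow> b \<in> A \<Longrightarrow> f a = f b \<longleftrightarrow> a = b"
  unfolding smono_def by (metis less_irrefl not_less_iff_gr_or_eq)

lemma smono_inj: "smono A f \<Longrightarrow> inj_on f A"
  by (auto simp: inj_on_def smono_eq_iff)

lemma rank_nth: "sorted_wrt (<) (xs::int list) \<Longrightarrow> k < length xs \<Longrightarrow> card {w \<in> set xs. w < xs ! k} = k"
proof (induction xs arbitrary: k)
  case Nil then show ?case by simp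
next
  case (Cons x xs)
  show ?case
  proof (cases k)
    case 0
    have "{w \<in> set (x # xs). w < (x # xs) ! k} = {}" using Cons.prems 0 by force
    then show ?thesis using 0 by simp
  next
    case (Suc k')
    have lt: "x < xs ! k'" using Cons.prems Suc by auto
    have "{w \<in> set (x # xs). w < (x # xs) ! k} = insert x {w \<in> set xs. w < xs ! k'}"
      using Suc lt by auto
    moreover have "x \<notin> set xs" using Cons.prems by auto
    ultimately show ?thesis using Cons Suc by simp
  qed
qed

lemma rank_map:
  fixes A B :: "int set"
  assumes "finite A" "finite B" "card A = card B"
  defines "g \<equiv> (\<lambda>z. sorted_list_of_set B ! card {w \<in> A. w < z})"
  shows "smono A g \<and> g ` A = B"
proof -
  let ?xs = "sorted_list_of_set A" and ?ys = "sorted_list_of_set B"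
  have sx: "sorted_wrt (<) ?xs" and sy: "sorted_wrt (<) ?ys"
    by (simp_all add: strict_sorted_list_of_set)
  have setx: "set ?xs = A" and sety: "set ?ys = B" using assms by simp_all
  have len: "length ?xs = length ?ys" using assms by simp
  have gk: "g (?xs ! k) = ?ys ! k" if "k < length ?xs" for k
    using rank_nth[OF sx that] setx unfolding g_def by simp
  have sm: "smono A g"
    unfolding smono_def
  proof (intro ballI impI)
    fix a b assume a: "a \<in> A" and b: "b \<in> A" and ab: "a < b"
    obtain i where i: "i < length ?xs" "a = ?xs ! i" using a setx by (metis in_set_conv_nth)
    obtain j where j: "j < length ?xs" "b = ?xs ! j" using b setx by (metis in_set_conv_nth)
    have "i < j"
    proof (rule ccontr)
      assume "\<not> i < j"
      then have "j \<le> i" by simp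
      then have "?xs ! j \<le> ?xs ! i"
        using sx i j by (metis le_less sorted_wrt_nth_less order_less_imp_le)
      then show False using i j ab by simp
    qed
    then show "g a < g b" using gk i j len sy by (simp add: sorted_wrt_nth_less)
  qed
  have "g ` A = B"
  proof
    show "g ` A \<subseteq> B"
    proof
      fix y assume "y \<in> g ` A"
      then obtain a where a: "a \<in> A" "y = g a" by auto
      obtain i where i: "i < length ?xs" "a = ?xs ! i" using a setx by (metis in_set_conv_nth)
      then show "y \<in> B" using gk a len sety by (metis nth_mem)
    qed
  next
    show "B \<subseteq> g ` A"
    proof
      fix y assume "y \<in> B"
      then obtain i where i: "i < length ?ys" "y = ?ys ! i" using sety by (metis in_set_conv_nth)
      then have "y = g (?xs ! i)" using gk len by simp
      then show "y \<in> g ` A" using i len setx by (metis image_eqI nth_mem)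
    qed
  qed
  then show ?thesis using sm by simp
qed



lemma hr_Node: "hr_tree (Node l x r) \<longleftrightarrow> hr_tree l \<and> hr_tree r \<and> x \<notin> set_tree l \<and> x \<notin> set_tree r
   \<and> set_tree l \<inter> set_tree r = {}
   \<and> (x = Min (set_tree (Node l x r)) \<or> x = Max (set_tree (Node l x r)))
   \<and> ((l \<noteq> Leaf \<or> r \<noteq> Leaf) \<longrightarrow> r \<noteq> Leaf
        \<and> (x = Min (set_tree (Node l x r)) \<longrightarrow> Max (set_tree (Node l x r)) \<in> set_tree r)
        \<and> (x = Max (set_tree (Node l x r)) \<longrightarrow> Min (set_tree (Node l x r)) \<in> set_tree r))"
proof -
  have d: "distinct (inorder (Node l x r)) \<longleftrightarrow> distinct (inorder l) \<and> distinct (inorder r)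
     \<and> x \<notin> set_tree l \<and> x \<notin> set_tree r \<and> set_tree l \<inter> set_tree r = {}"
    by (auto simp: set_inorder[symmetric] simp del: set_inorder)
  show ?thesis unfolding hr_tree_def minmax_tree_def d minmax_nodes.simps(2) hr_nodes.simps(2) by blast
qed

fun ty :: "int tree \<Rightarrow> bool tree" where
  "ty Leaf = Leaf"
| "ty (Node l x r) = Node (ty l) (x = Min (set_tree (Node l x r))) (ty r)"

lemma shp_ty: "shp (ty t) = shp t"
  by (induction t) auto

lemma ty_Leaf_iff[simp]: "ty t = Leaf \<longleftrightarrow> t = Leaf"
  by (cases t) auto

lemma wfB_ty: "hr_tree t \<Longrightarrow> wfB (ty t)"
proof (induction t)
  case Leaf then show ?case by simp
next
  case (Node l x r)
  then show ?case by (auto simp: hr_Node)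
qed

lemma minmax_other: "hr_tree (Node l x r) \<Longrightarrow> x \<noteq> Min (set_tree (Node l x r)) \<Longrightarrow> x = Max (set_tree (Node l x r))"
  by (auto simp: hr_Node simp del: tree.set)

lemma dirs_Dty: "hr_tree t \<Longrightarrow> dirs (inorder t) = Dty (ty t)"
proof (induction t)
  case Leaf then show ?case by simp
next
  case (Node l x r)
  let ?S = "set_tree (Node l x r)"
  have h: "hr_tree l" "hr_tree r" "x \<notin> set_tree l" "x \<notin> set_tree r" using Node.prems by (auto simp: hr_Node)
  have fin: "finite ?S" by simp
  have c1: "l \<noteq> Leaf \<Longrightarrow> (last (inorder l) < x) = (\<not> (x = Min ?S))"
  proof -
    assume l: "l \<noteq> Leaf"
    then have "inorder l \<noteq> []" by (cases l) auto
    then have mem: "last (inorder l) \<in> set_tree l" by (metis last_in_set set_inorder) 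
    then have memS: "last (inorder l) \<in> ?S" by auto
    show ?thesis
    proof (cases "x = Min ?S")
      case True
      then have "x \<le> last (inorder l)" using Min_le[OF fin memS] by metis
      moreover have "x \<noteq> last (inorder l)" using mem h by auto
      ultimately show ?thesis using True by auto
    next
      case False
      then have "x = Max ?S" using minmax_other Node.prems by blast
      then have "last (inorder l) \<le> x" using Max_ge[OF fin memS] by metis
      moreover have "x \<noteq> last (inorder l)" using mem h by auto
      ultimately show ?thesis using False by auto
    qed
  qed
  have c2: "r \<noteq> Leaf \<Longrightarrow> (x < hd (inorder r)) = (x = Min ?S)"
  proof -
    assume r: "r \<noteq> Leaf"
    then have "inorder r \<noteq> []" by (cases r) auto
    then have mem: "hd (inorder r) \<in> set_tree r" by (metis hd_in_set set_inorder) 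
    then have memS: "hd (inorder r) \<in> ?S" by auto
    show ?thesis
    proof (cases "x = Min ?S")
      case True
      then have "x \<le> hd (inorder r)" using Min_le[OF fin memS] by metis
      moreover have "x \<noteq> hd (inorder r)" using mem h by auto
      ultimately show ?thesis using True by auto
    next
      case False
      then have "x = Max ?S" using minmax_other Node.prems by blast
      then have "hd (inorder r) \<le> x" using Max_ge[OF fin memS] by metis
      moreover have "x \<noteq> hd (inorder r)" using mem h by auto
      ultimately show ?thesis using False by auto
    qed
  qed
  have e1: "inorder l = [] \<longleftrightarrow> l = Leaf" by (cases l) auto
  have e2: "inorder r = [] \<longleftrightarrow> r = Leaf" by (cases r) auto
  show ?case
    using Node.IH h c1 c2 e1 e2 by (simp add: dirs_mid del: tree.set)
qed

lemma smono_Min: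
  assumes "smono S f" "finite S" "S \<noteq> {}"
  shows "Min (f ` S) = f (Min S)"
proof (rule Min_eqI)
  show "finite (f ` S)" using assms by simp
  show "f (Min S) \<in> f ` S" using assms by simp
  fix y assume "y \<in> f ` S"
  then obtain a where a: "a \<in> S" "y = f a" by auto
  have "Min S \<le> a" using a assms by simp
  then show "f (Min S) \<le> y" using a assms Min_in[of S] unfolding smono_def
    by (metis le_less)
qed

lemma smono_Max:
  assumes "smono S f" "finite S" "S \<noteq> {}"
  shows "Max (f ` S) = f (Max S)"
proof (rule Max_eqI)
  show "finite (f ` S)" using assms by simp
  show "f (Max S) \<in> f ` S" using assms by simp
  fix y assume "y \<in> f ` S"
  then obtain a where a: "a \<in> S" "y = f a" by auto
  have "a \<le> Max S" using a assms by simp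
  then show "y \<le> f (Max S)" using a assms Max_in[of S] unfolding smono_def
    by (metis le_less)
qed

lemma smono_Min_iff:
  "smono S f \<Longrightarrow> finite S \<Longrightarrow> x \<in> S \<Longrightarrow> (f x = Min (f ` S)) \<longleftrightarrow> (x = Min S)"
proof -
  assume a: "smono S f" "finite S" "x \<in> S"
  then have ne: "S \<noteq> {}" by auto
  have "Min (f ` S) = f (Min S)" using smono_Min[OF a(1,2) ne] .
  then show ?thesis using smono_eq_iff[OF a(1) a(3) Min_in[OF a(2) ne]] by simp
qed

lemma smono_Max_iff:
  "smono S f \<Longrightarrow> finite S \<Longrightarrow> x \<in> S \<Longrightarrow> (f x = Max (f ` S)) \<longleftrightarrow> (x = Max S)"
proof -
  assume a: "smono S f" "finite S" "x \<in> S"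
  then have ne: "S \<noteq> {}" by auto
  have "Max (f ` S) = f (Max S)" using smono_Max[OF a(1,2) ne] .
  then show ?thesis using smono_eq_iff[OF a(1) a(3) Max_in[OF a(2) ne]] by simp
qed

lemma ty_map: "smono (set_tree t) f \<Longrightarrow> ty (map_tree f t) = ty t"
proof (induction t)
  case Leaf then show ?case by simp
next
  case (Node l x r)
  have "smono (set_tree l) f" "smono (set_tree r) f" using Node.prems smono_subset by fastforce+
  moreover have e: "set_tree (Node (map_tree f l) (f x) (map_tree f r)) = f ` set_tree (Node l x r)"
    by (simp add: image_Un tree.set_map)
  moreover have "(f x = Min (f ` set_tree (Node l x r))) = (x = Min (set_tree (Node l x r)))"
    using smono_Min_iff[OF Node.prems, of x] by simp
  ultimately show ?case using Node.IH by (simp only: tree.map ty.simps)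
qed

lemma hr_map: "smono (set_tree t) f \<Longrightarrow> hr_tree t \<Longrightarrow> hr_tree (map_tree f t)"
proof (induction t)
  case Leaf then show ?case by simp
next
  case (Node l x r)
  let ?S = "set_tree (Node l x r)"
  have sm: "smono (set_tree l) f" "smono (set_tree r) f" using Node.prems smono_subset by fastforce+
  have inj: "inj_on f ?S" using smono_inj Node.prems by blast
  have h: "hr_tree l" "hr_tree r" "x \<notin> set_tree l" "x \<notin> set_tree r" "set_tree l \<inter> set_tree r = {}"
    using Node.prems by (auto simp: hr_Node)
  have S': "set_tree (map_tree f (Node l x r)) = f ` ?S" by (simp only: tree.set_map)
  have mi: "(f x = Min (f ` ?S)) = (x = Min ?S)" using smono_Min_iff[OF Node.prems(1), of x] by simp
  have ma: "(f x = Max (f ` ?S)) = (x = Max ?S)" using smono_Max_iff[OF Node.prems(1), of x] by simp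
  have mi2: "Min (f ` ?S) = f (Min ?S)" using smono_Min[OF Node.prems(1)] by simp
  have ma2: "Max (f ` ?S) = f (Max ?S)" using smono_Max[OF Node.prems(1)] by simp
  have d1: "f x \<notin> f ` set_tree l" using inj h by (auto simp: inj_on_def)
  have d2: "f x \<notin> f ` set_tree r" using inj h by (auto simp: inj_on_def)
  have d3: "f ` set_tree l \<inter> f ` set_tree r = {}" using inj h
    by (auto simp: inj_on_def)
  have rc: "(x = Min ?S \<or> x = Max ?S) \<and> ((l \<noteq> Leaf \<or> r \<noteq> Leaf) \<longrightarrow> r \<noteq> Leaf
        \<and> (x = Min ?S \<longrightarrow> Max ?S \<in> set_tree r) \<and> (x = Max ?S \<longrightarrow> Min ?S \<in> set_tree r))"
    using Node.prems(2) unfolding hr_Node by blast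
  have memr: "\<And>a. a \<in> ?S \<Longrightarrow> (f a \<in> f ` set_tree r) = (a \<in> set_tree r)"
    using inj by (auto simp: inj_on_def)
  have mS: "Min ?S \<in> ?S" "Max ?S \<in> ?S" by (simp_all del: tree.set)
  have xS: "x \<in> ?S" by simp
  have S'': "set_tree (Node (map_tree f l) (f x) (map_tree f r)) = f ` ?S" using S' by simp
  have lf: "map_tree f l = Leaf \<longleftrightarrow> l = Leaf" "map_tree f r = Leaf \<longleftrightarrow> r = Leaf"
    by (cases l; simp) (cases r; simp)
  show ?case
    unfolding tree.map hr_Node S'' mi2 ma2 tree.set_map lf
    using smono_eq_iff[OF Node.prems(1) xS mS(1)] smono_eq_iff[OF Node.prems(1) xS mS(2)] Node.IH sm h d1 d2 d3 rc memr[OF mS(1)] memr[OF mS(2)]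
    by (simp del: tree.set) blast
qed

definition rk :: "int set \<Rightarrow> int \<Rightarrow> nat" where
  "rk X a = card {b \<in> X. b < a}"

fun invt :: "int tree \<Rightarrow> nat set tree" where
  "invt Leaf = Leaf"
| "invt (Node l x r) = Node (invt l) (rk (set_tree (Node l x r)) ` set_tree l) (invt r)"

lemma rk_map: "smono X f \<Longrightarrow> finite X \<Longrightarrow> a \<in> X \<Longrightarrow> rk (f ` X) (f a) = rk X a"
proof -
  assume sm: "smono X f" and fin: "finite X" and a: "a \<in> X"
  have "{b \<in> f ` X. b < f a} = f ` {b \<in> X. b < a}"
    using smono_less_iff[OF sm _ a] by auto
  moreover have "inj_on f {b \<in> X. b < a}" using smono_inj[OF sm] by (rule inj_on_subset) auto
  ultimately show ?thesis unfolding rk_def by (simp add: card_image)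
qed

lemma invt_map: "smono (set_tree t) f \<Longrightarrow> invt (map_tree f t) = invt t"
proof (induction t)
  case Leaf then show ?case by simp
next
  case (Node l x r)
  let ?S = "set_tree (Node l x r)"
  have sm: "smono (set_tree l) f" "smono (set_tree r) f" using Node.prems smono_subset by fastforce+
  have "rk (f ` ?S) ` f ` set_tree l = rk ?S ` set_tree l"
    using rk_map[OF Node.prems] by (force simp: image_image)
  then show ?case using Node.IH sm by (simp add: tree.set_map image_Un)
qed

lemma rk_inj: "finite X \<Longrightarrow> inj_on (rk X) X"
proof (rule inj_onI)
  fix a b assume fin: "finite X" and a: "a \<in> X" and b: "b \<in> X" and e: "rk X a = rk X b"
  show "a = b"
  proof (rule ccontr)
    assume "a \<noteq> b"
    then consider "a < b" | "b < a" by linarith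
    then show False
    proof cases
      case 1
      have sub: "{c \<in> X. c < a} \<subset> {c \<in> X. c < b}" using 1 a b by auto
      have "rk X a < rk X b" unfolding rk_def by (rule psubset_card_mono[OF _ sub]) (simp add: fin)
      then show False using e by simp
    next
      case 2
      have sub: "{c \<in> X. c < b} \<subset> {c \<in> X. c < a}" using 2 a b by auto
      have "rk X b < rk X a" unfolding rk_def by (rule psubset_card_mono[OF _ sub]) (simp add: fin)
      then show False using e by simp
    qed
  qed
qed

lemma inj_recover: "inj_on h X \<Longrightarrow> A \<subseteq> X \<Longrightarrow> A = {a \<in> X. h a \<in> h ` A}"
  by (auto simp: inj_on_def)

lemma Inj:
  "hr_tree s \<Longrightarrow> hr_tree t \<Longrightarrow> set_tree s = set_tree t \<Longrightarrow> invt s = invt t \<Longrightarrow> ty s = ty t \<Longrightarrow> s = t"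
proof (induction s arbitrary: t)
  case Leaf then show ?case by (cases t) auto
next
  case (Node l1 x1 r1)
  obtain l2 x2 r2 where t: "t = Node l2 x2 r2" using Node.prems by (cases t) auto
  let ?X = "set_tree (Node l1 x1 r1)"
  have X: "set_tree (Node l2 x2 r2) = ?X" using Node.prems t by simp
  have h1: "hr_tree l1" "hr_tree r1" "x1 \<notin> set_tree l1" "x1 \<notin> set_tree r1" "set_tree l1 \<inter> set_tree r1 = {}"
    using Node.prems by (auto simp: hr_Node)
  have h2: "hr_tree l2" "hr_tree r2" "x2 \<notin> set_tree l2" "x2 \<notin> set_tree r2" "set_tree l2 \<inter> set_tree r2 = {}"
    using Node.prems t by (auto simp: hr_Node)
  have tyeq: "(x1 = Min ?X) = (x2 = Min ?X)" using Node.prems t X by simp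
  have x: "x1 = x2"
  proof (cases "x1 = Min ?X")
    case True then show ?thesis using tyeq by simp
  next
    case False
    then have "x1 = Max ?X" using minmax_other Node.prems by blast
    moreover have "x2 = Max ?X" using minmax_other[of l2 x2 r2] Node.prems t X False tyeq by simp
    ultimately show ?thesis by simp
  qed
  have K: "rk ?X ` set_tree l1 = rk ?X ` set_tree l2" using Node.prems t X by simp
  have fin: "finite ?X" by simp
  have sl: "set_tree l1 = set_tree l2"
  proof -
    have "set_tree l1 = {a \<in> ?X. rk ?X a \<in> rk ?X ` set_tree l1}"
      by (rule inj_recover[OF rk_inj[OF fin]]) auto
    moreover have "set_tree l2 = {a \<in> ?X. rk ?X a \<in> rk ?X ` set_tree l2}"
      by (rule inj_recover[OF rk_inj[OF fin]]) (use X in auto)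
    ultimately show ?thesis using K by simp
  qed
  have l: "l1 = l2" using Node.IH(1)[of l2] h1 h2 sl Node.prems t by simp
  have sr: "set_tree r1 = set_tree r2"
  proof -
    have "set_tree r1 = ?X - set_tree l1 - {x1}" using h1 by auto
    moreover have "set_tree r2 = ?X - set_tree l2 - {x2}" using h2 X by auto
    ultimately show ?thesis using sl x by simp
  qed
  have r: "r1 = r2" using Node.IH(2)[of r2] h1 h2 sr Node.prems t by simp
  show ?case using l x r t by simp
qed



lemma shp_map: "shp (map_tree f t) = shp t"
  by (induction t) auto

lemma relabel_char:
  assumes hr: "hr_tree (Node l y r)" and rne: "r \<noteq> Leaf"
  obtains y' g where "relabel_node l y r = Node l y' (map_tree g r)" "smono (set_tree r) g"
    "g ` set_tree r = insert y (set_tree r) - {y'}" "y' \<in> insert y (set_tree r)"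
    "y = Min (set_tree (Node l y r)) \<Longrightarrow> y' = Max (set_tree (Node l y r))"
    "y \<noteq> Min (set_tree (Node l y r)) \<Longrightarrow> y' = Min (set_tree (Node l y r))"
proof -
  define S where "S = set_tree (Node l y r)"
  define R where "R = insert y (set_tree r)"
  define y' where "y' = (if y = Min S then Max R else Min R)"
  define new where "new = sorted_list_of_set (R - {y'})"
  define f where "f = (\<lambda>z. new ! card {w \<in> set_tree r. w < z})"
  have h: "y \<notin> set_tree r" "y \<notin> set_tree l" "set_tree l \<inter> set_tree r = {}"
    "y = Min S \<longrightarrow> Max S \<in> set_tree r" "y = Max S \<longrightarrow> Min S \<in> set_tree r"
    "y = Min S \<or> y = Max S"
    using hr rne unfolding hr_Node S_def by blast+
  have finR: "finite R" and neR: "R \<noteq> {}" by (auto simp: R_def)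
  have RS: "R \<subseteq> S" by (auto simp: R_def S_def)
  have finS: "finite S" by (simp add: S_def)
  have y'R: "y' \<in> R" using finR neR by (simp add: y'_def)
  have cardR: "card (R - {y'}) = card (set_tree r)"
    using y'R finR h(1) by (simp add: R_def)
  have rm: "smono (set_tree r) f \<and> f ` set_tree r = R - {y'}"
    using rank_map[of "set_tree r" "R - {y'}"] cardR finR
    unfolding f_def new_def by simp
  have rel: "relabel_node l y r = Node l y' (map_tree f r)"
    unfolding relabel_node_def Let_def f_def new_def y'_def R_def S_def by simp
  have c1: "y' = Max S" if "y = Min S"
  proof -
    have "Max S \<in> R" using h(4) that by (simp add: R_def)
    then have "Max R = Max S"
      using RS finS finR by (meson Max_ge Max_in neR order_antisym subsetD Max_mono)
    then show ?thesis using that by (simp add: y'_def)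
  qed
  have c2: "y' = Min S" if "y \<noteq> Min S"
  proof -
    have "Min S \<in> R" using h(5) h(6) that by (simp add: R_def)
    then have "Min R = Min S"
      using RS finS finR by (meson Min_le Min_in neR order_antisym subsetD Min_antimono)
    then show ?thesis using that by (simp add: y'_def)
  qed
  show ?thesis
    using that[OF rel] rm y'R c1 c2 unfolding R_def S_def by blast
qed

lemma card_ge2: "hr_tree (Node l y r) \<Longrightarrow> r \<noteq> Leaf \<Longrightarrow> Min (set_tree (Node l y r)) \<noteq> Max (set_tree (Node l y r))"
proof -
  assume hr: "hr_tree (Node l y r)" and r: "r \<noteq> Leaf"
  obtain a where a: "a \<in> set_tree r" using r by (cases r) auto
  have "y \<noteq> a" using hr a unfolding hr_Node by blast
  moreover have "Min (set_tree (Node l y r)) \<le> y" "Min (set_tree (Node l y r)) \<le> a"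
    "y \<le> Max (set_tree (Node l y r))" "a \<le> Max (set_tree (Node l y r))" using a by auto
  ultimately show ?thesis by (metis order_antisym order_trans)
qed

lemma relabel_facts:
  assumes hr: "hr_tree (Node l y r)" and rne: "r \<noteq> Leaf"
  shows "set_tree (relabel_node l y r) = set_tree (Node l y r)"
    "hr_tree (relabel_node l y r)"
    "ty (relabel_node l y r) = Node (ty l) (\<not> (y = Min (set_tree (Node l y r)))) (ty r)"
    "invt (relabel_node l y r) = invt (Node l y r)"
    "l \<noteq> Leaf \<Longrightarrow> hd (inorder (relabel_node l y r)) = hd (inorder (Node l y r))"
proof -
  define S where "S = set_tree (Node l y r)"
  obtain y' g where o: "relabel_node l y r = Node l y' (map_tree g r)" "smono (set_tree r) g"
    "g ` set_tree r = insert y (set_tree r) - {y'}" "y' \<in> insert y (set_tree r)"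
    "y = Min S \<Longrightarrow> y' = Max S" "y \<noteq> Min S \<Longrightarrow> y' = Min S"
    using relabel_char[OF hr rne] unfolding S_def by metis
  have h: "y \<notin> set_tree r" "y \<notin> set_tree l" "set_tree l \<inter> set_tree r = {}"
    "y = Min S \<longrightarrow> Max S \<in> set_tree r" "y = Max S \<longrightarrow> Min S \<in> set_tree r"
    "y = Min S \<or> y = Max S" "hr_tree l" "hr_tree r"
    using hr rne unfolding hr_Node S_def by blast+
  have mM: "Min S \<noteq> Max S" using card_ge2[OF hr rne] by (simp add: S_def)
  have set': "set_tree (Node l y' (map_tree g r)) = S"
    using o(3) o(4) by (auto simp: S_def tree.set_map)
  show s1: "set_tree (relabel_node l y r) = set_tree (Node l y r)"
    using set' o(1) by (simp add: S_def)
  have mr: "map_tree g r \<noteq> Leaf" using rne by (cases r) auto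
  have y'l: "y' \<notin> set_tree l" using o(4) h by auto
  have y'r: "y' \<notin> set_tree (map_tree g r)" using o(3) by (simp add: tree.set_map)
  have dj: "set_tree l \<inter> set_tree (map_tree g r) = {}" using o(3) h by (auto simp: tree.set_map)
  have hrm: "hr_tree (map_tree g r)" using hr_map[OF o(2) h(8)] .
  have root: "(y' = Min S \<or> y' = Max S) \<and> (y' = Min S \<longrightarrow> Max S \<in> set_tree (map_tree g r))
       \<and> (y' = Max S \<longrightarrow> Min S \<in> set_tree (map_tree g r))"
  proof (cases "y = Min S")
    case True
    then have "y' = Max S" using o(5) by simp
    moreover have "Min S \<in> set_tree (map_tree g r)" using True o(3) \<open>y' = Max S\<close> mM
      by (simp add: tree.set_map)
    ultimately show ?thesis using mM by simp
  next
    case False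
    then have "y' = Min S" using o(6) by simp
    moreover have "y = Max S" using h(6) False by simp
    moreover have "Max S \<in> set_tree (map_tree g r)" using o(3) \<open>y' = Min S\<close> \<open>y = Max S\<close> mM
      by (simp add: tree.set_map)
    ultimately show ?thesis using mM by simp
  qed
  show "hr_tree (relabel_node l y r)"
    unfolding o(1) hr_Node set' using h(7) hrm y'l y'r dj root mr by blast
  have tyr: "ty (map_tree g r) = ty r" using ty_map[OF o(2)] .
  have "(y' = Min S) = (\<not> (y = Min S))" using o(5) o(6) mM by auto
  then show "ty (relabel_node l y r) = Node (ty l) (\<not> (y = Min (set_tree (Node l y r)))) (ty r)"
    using o(1) tyr set' by (simp add: S_def del: tree.set)
  show "invt (relabel_node l y r) = invt (Node l y r)"
    using o(1) set' invt_map[OF o(2)] by (simp add: S_def del: tree.set)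
  show "l \<noteq> Leaf \<Longrightarrow> hd (inorder (relabel_node l y r)) = hd (inorder (Node l y r))"
    using o(1) by (cases l) (auto simp: hd_append)
qed

lemma shp_relabel: "shp (relabel_node l y r) = shp (Node l y r)"
  unfolding relabel_node_def Let_def by (simp add: shp_map)

lemma shp_psi: "shp (psi_at z t) = shp t"
  by (induction t) (auto simp: shp_relabel)

lemma psi_notin: "z \<notin> set_tree t \<Longrightarrow> psi_at z t = t"
  by (induction t) auto

lemma psi_pres:
  "hr_tree t \<Longrightarrow> hr_tree (psi_at z t) \<and> set_tree (psi_at z t) = set_tree t \<and> invt (psi_at z t) = invt t"
proof (induction t)
  case Leaf then show ?case by simp
next
  case (Node l y r)
  show ?case
  proof (cases "y = z")
    case True
    show ?thesis
    proof (cases "(l = Leaf \<and> r = Leaf) \<or> l = Node Leaf 0 Leaf \<or> r = Node Leaf 0 Leaf")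
      case True2: True
      then show ?thesis using True Node.prems by auto
    next
      case False
      then have rne: "r \<noteq> Leaf" using Node.prems unfolding hr_Node by blast
      have "psi_at z (Node l y r) = relabel_node l y r" using True False by auto
      then show ?thesis using relabel_facts[OF Node.prems rne] by simp
    qed
  next
    case False
    have h: "hr_tree l" "hr_tree r" using Node.prems unfolding hr_Node by blast+
    let ?l = "psi_at z l" and ?r = "psi_at z r"
    have IH: "hr_tree ?l" "set_tree ?l = set_tree l" "invt ?l = invt l"
      "hr_tree ?r" "set_tree ?r = set_tree r" "invt ?r = invt r"
      using Node.IH h by auto
    have lf: "?l = Leaf \<longleftrightarrow> l = Leaf" "?r = Leaf \<longleftrightarrow> r = Leaf"
      using shp_psi[of z l] shp_psi[of z r] by (metis shp_Leaf_iff)+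
    have eq: "psi_at z (Node l y r) = Node ?l y ?r" using False by simp
    have S: "set_tree (Node ?l y ?r) = set_tree (Node l y r)" using IH by simp
    have "hr_tree (Node ?l y ?r)"
      unfolding hr_Node S by (simp only: IH lf) (use Node.prems[unfolded hr_Node] in blast)
    moreover have "invt (Node ?l y ?r) = invt (Node l y r)"
      using IH S by (simp del: tree.set)
    ultimately show ?thesis using eq S by simp
  qed
qed

lemma psi_hd:
  "hr_tree t \<Longrightarrow> t \<noteq> Leaf \<Longrightarrow> z \<noteq> hd (inorder t) \<Longrightarrow> hd (inorder (psi_at z t)) = hd (inorder t)"
proof (induction t)
  case Leaf then show ?case by simp
next
  case (Node l y r)
  have h: "hr_tree l" "hr_tree r" using Node.prems unfolding hr_Node by blast+
  show ?case
  proof (cases "y = z")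
    case True
    show ?thesis
    proof (cases "(l = Leaf \<and> r = Leaf) \<or> l = Node Leaf 0 Leaf \<or> r = Node Leaf 0 Leaf")
      case True2: True
      then show ?thesis using True by auto
    next
      case False
      then have rne: "r \<noteq> Leaf" using Node.prems unfolding hr_Node by blast
      have lne: "l \<noteq> Leaf" using Node.prems True by auto
      have "psi_at z (Node l y r) = relabel_node l y r" using True False by auto
      then show ?thesis using relabel_facts(5)[OF Node.prems(1) rne lne] by simp
    qed
  next
    case False
    have lf: "psi_at z l = Leaf \<longleftrightarrow> l = Leaf"
      using shp_psi[of z l] by (metis shp_Leaf_iff)
    show ?thesis
    proof (cases "l = Leaf")
      case True then show ?thesis using False lf by simp
    next
      case lne: False
      have "hd (inorder (Node l y r)) = hd (inorder l)" using lne by (cases l) (auto simp: hd_append)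
      moreover have "hd (inorder (psi_at z (Node l y r))) = hd (inorder (psi_at z l))"
        using False lf lne by (cases "psi_at z l") (auto simp: hd_append)
      ultimately show ?thesis using Node.IH(1) h lne Node.prems(3) by simp
    qed
  qed
qed



inductive_set reach :: "int tree \<Rightarrow> int tree set" for t where
  refl: "t \<in> reach t"
| step: "s \<in> reach t \<Longrightarrow> z \<in> set_tree s \<Longrightarrow> z \<noteq> 0 \<Longrightarrow> psi_at z s \<in> reach t"

definition Z :: "int tree \<Rightarrow> bool" where
  "Z t \<longleftrightarrow> (0 \<in> set_tree t \<longrightarrow> hd (inorder t) = 0)"

lemma reach_pres:
  assumes "hr_tree t" "s \<in> reach t"
  shows "hr_tree s \<and> set_tree s = set_tree t \<and> invt s = invt t \<and> shp s = shp t \<and> (Z t \<longrightarrow> Z s)"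
  using assms(2)
proof induction
  case refl then show ?case using assms(1) by simp
next
  case (step s z)
  have p: "hr_tree (psi_at z s) \<and> set_tree (psi_at z s) = set_tree s \<and> invt (psi_at z s) = invt s"
    using psi_pres step by blast
  have "Z s \<Longrightarrow> Z (psi_at z s)"
  proof -
    assume zs: "Z s"
    show "Z (psi_at z s)" unfolding Z_def
    proof
      assume "0 \<in> set_tree (psi_at z s)"
      then have 0: "0 \<in> set_tree s" using p by simp
      then have "s \<noteq> Leaf" by auto
      moreover have "hd (inorder s) = 0" using zs 0 by (simp add: Z_def)
      ultimately show "hd (inorder (psi_at z s)) = 0"
        using psi_hd[of s z] step by simp
    qed
  qed
  then show ?case using p step shp_psi by simp
qed

lemma reach_trans: "u \<in> reach s \<Longrightarrow> s \<in> reach t \<Longrightarrow> u \<in> reach t"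
  by (induction rule: reach.induct) (auto intro: reach.step)

lemma reach_lift_l:
  assumes hr: "hr_tree (Node l x r)" and s: "s \<in> reach l"
  shows "Node s x r \<in> reach (Node l x r)"
  using s
proof induction
  case refl then show ?case by (rule reach.refl)
next
  case (step s z)
  have hl: "hr_tree l" using hr unfolding hr_Node by blast
  have ss: "set_tree s = set_tree l" using reach_pres[OF hl step(1)] by simp
  have zx: "z \<noteq> x" "z \<notin> set_tree r" using hr step(2) ss unfolding hr_Node by auto
  have "psi_at z (Node s x r) = Node (psi_at z s) x r" using zx psi_notin by simp
  moreover have "psi_at z (Node s x r) \<in> reach (Node l x r)"
    using reach.step[OF step(4), of z] step(2,3) by simp
  ultimately show ?case by simp
qed

lemma reach_lift_r:
  assumes hr: "hr_tree (Node l x r)" and s: "s \<in> reach r"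
  shows "Node l x s \<in> reach (Node l x r)"
  using s
proof induction
  case refl then show ?case by (rule reach.refl)
next
  case (step s z)
  have hl: "hr_tree r" using hr unfolding hr_Node by blast
  have ss: "set_tree s = set_tree r" using reach_pres[OF hl step(1)] by simp
  have zx: "z \<noteq> x" "z \<notin> set_tree l" using hr step(2) ss unfolding hr_Node by auto
  have "psi_at z (Node l x s) = Node l x (psi_at z s)" using zx psi_notin by simp
  moreover have "psi_at z (Node l x s) \<in> reach (Node l x r)"
    using reach.step[OF step(4), of z] step(2,3) by simp
  ultimately show ?case by simp
qed

lemma toggle:
  assumes "x \<noteq> 0" "\<not> (l = Leaf \<and> r = Leaf)" "l \<noteq> Node Leaf 0 Leaf" "r \<noteq> Node Leaf 0 Leaf"
  shows "relabel_node l x r \<in> reach (Node l x r)"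
proof -
  have "psi_at x (Node l x r) \<in> reach (Node l x r)"
    by (rule reach.step[OF reach.refl]) (use assms in auto)
  then show ?thesis using assms by simp
qed

lemma hd_inorder_Node: "hd (inorder (Node l x r)) = (if l = Leaf then x else hd (inorder l))"
  by (cases l) (auto simp: hd_append)

lemma hd_inorder_in: "t \<noteq> Leaf \<Longrightarrow> hd (inorder t) \<in> set_tree t"
  by (metis hd_in_set inorder.simps(1) neq_Leaf_iff set_inorder tree.simps(3) inorder.simps(2) append_is_Nil_conv list.distinct(1))

lemma Z_right: "hr_tree (Node l x r) \<Longrightarrow> Z (Node l x r) \<Longrightarrow> 0 \<notin> set_tree r"
proof
  assume hr: "hr_tree (Node l x r)" and z: "Z (Node l x r)" and 0: "0 \<in> set_tree r"
  then have h: "hd (inorder (Node l x r)) = 0" by (simp add: Z_def)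
  have "hd (inorder (Node l x r)) \<in> insert x (set_tree l)"
    unfolding hd_inorder_Node using hd_inorder_in[of l] by auto
  then show False using h 0 hr unfolding hr_Node by auto
qed

lemma tight_leaf: "tightB (Node Leaf True Leaf)"
  by (simp add: tightB_def)

lemma finish:
  assumes t1: "Node l1 x1 r1 \<in> reach t" and hrt: "hr_tree t" and r1: "r1 \<noteq> Leaf"
    and m1: "m1 = (x1 = Min (set_tree (Node l1 x1 r1)))"
    and P2: "l1 \<noteq> Leaf \<longrightarrow> tightB (ty l1) \<and> (Dty (ty l1) = [] \<or> last (Dty (ty l1)) = (\<not> m1))"
    and P3: "hd (Dty (ty (Node l1 x1 r1))) = s"
    and FR: "\<exists>r2\<in>reach r1. tightB (ty r2) \<and> (Dty (ty r2) = [] \<or> hd (Dty (ty r2)) = m1)"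
  shows "\<exists>t'\<in>reach t. tightB (ty t') \<and> hd (Dty (ty t')) = s"
proof -
  have hr1: "hr_tree (Node l1 x1 r1)" using reach_pres[OF hrt t1] by simp
  obtain r2 where r2: "r2 \<in> reach r1" "tightB (ty r2)" "Dty (ty r2) = [] \<or> hd (Dty (ty r2)) = m1"
    using FR by blast
  have hrr: "hr_tree r1" using hr1 unfolding hr_Node by blast
  have pr: "hr_tree r2" "set_tree r2 = set_tree r1" "shp r2 = shp r1" using reach_pres[OF hrr r2(1)] by auto
  have r2ne: "r2 \<noteq> Leaf" using pr(3) r1 by (metis shp_Leaf_iff)
  have t2: "Node l1 x1 r2 \<in> reach t" using reach_trans[OF reach_lift_r[OF hr1 r2(1)] t1] .
  have hr2: "hr_tree (Node l1 x1 r2)" using reach_pres[OF hrt t2] by simp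
  have ty2: "ty (Node l1 x1 r2) = Node (ty l1) m1 (ty r2)" using m1 pr(2) by (simp del: tree.set) simp
  have w: "wfB (Node (ty l1) m1 (ty r2))" using wfB_ty[OF hr2] ty2 r2ne by simp
  have tyr2: "ty r2 \<noteq> Leaf" using r2ne by simp
  have tyr1: "ty r1 \<noteq> Leaf" using r1 by simp
  have lf: "ty l1 = Leaf \<longleftrightarrow> l1 = Leaf" by simp
  have "tightB (Node (ty l1) m1 (ty r2))"
    using TN[OF w tyr2] P2 r2 lf by blast
  moreover have "hd (Dty (Node (ty l1) m1 (ty r2))) = s"
    using P3 hd_Dty[OF tyr2, of "ty l1" m1] hd_Dty[OF tyr1, of "ty l1" m1] m1 by (simp del: Dty.simps)
  ultimately show ?thesis using t2 ty2 by metis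
qed



lemma Dty_ty_nil: "hr_tree t \<Longrightarrow> t \<noteq> Leaf \<Longrightarrow> Dty (ty t) = [] \<longleftrightarrow> (\<exists>a. t = Node Leaf a Leaf)"
proof -
  assume hr: "hr_tree t" and ne: "t \<noteq> Leaf"
  have "Dty (ty t) = [] \<longleftrightarrow> (\<exists>m. ty t = Node Leaf m Leaf)"
    using Dty_nil_iff[OF wfB_ty[OF hr]] ne by simp
  also have "\<dots> \<longleftrightarrow> (\<exists>a. t = Node Leaf a Leaf)"
    by (cases t) auto
  finally show ?thesis .
qed

lemma size0: "size t = 0 \<longleftrightarrow> t = Leaf"
  by (cases t) auto

lemma ty_single: "ty (Node Leaf a Leaf) = Node Leaf True Leaf"
  by simp

lemma relabel_ty_root:
  assumes hr: "hr_tree (Node l y r)" and rne: "r \<noteq> Leaf"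
  obtains y' r' where "relabel_node l y r = Node l y' r'" "r' \<noteq> Leaf"
    "(y' = Min (set_tree (Node l y' r'))) = (\<not> (y = Min (set_tree (Node l y r))))"
proof -
  obtain y' g where o: "relabel_node l y r = Node l y' (map_tree g r)"
    using relabel_char[OF hr rne] by metis
  have "ty (relabel_node l y r) = Node (ty l) (\<not> (y = Min (set_tree (Node l y r)))) (ty r)"
    using relabel_facts(3)[OF hr rne] .
  then have "(y' = Min (set_tree (Node l y' (map_tree g r)))) = (\<not> (y = Min (set_tree (Node l y r))))"
    using o by (simp del: tree.set)
  moreover have "map_tree g r \<noteq> Leaf" using rne by (cases r) auto
  ultimately show ?thesis using that o by blast
qed

lemma E:
  "hr_tree t \<Longrightarrow> 2 \<le> size t \<Longrightarrow> Z t \<Longrightarrow> (0 \<in> set_tree t \<longrightarrow> s = hd (Dty (ty t)))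
   \<Longrightarrow> \<exists>t'\<in>reach t. tightB (ty t') \<and> hd (Dty (ty t')) = s"
proof (induction "size t" arbitrary: t s rule: less_induct)
  case less
  obtain l x r where t: "t = Node l x r" using less.prems(2) by (cases t) auto
  have hr: "hr_tree (Node l x r)" using less.prems t by simp
  have r: "r \<noteq> Leaf"
  proof
    assume "r = Leaf"
    then have "l = Leaf" using hr unfolding hr_Node by blast
    then show False using \<open>r = Leaf\<close> less.prems(2) t by simp
  qed
  have hl: "hr_tree l" and hrr: "hr_tree r" and xl: "x \<notin> set_tree l" and xr: "x \<notin> set_tree r"
    using hr unfolding hr_Node by blast+
  have FR: "\<exists>r2\<in>reach r1. tightB (ty r2) \<and> (Dty (ty r2) = [] \<or> hd (Dty (ty r2)) = b)"
    if h1: "hr_tree r1" "size r1 < size t" "r1 \<noteq> Leaf" "0 \<notin> set_tree r1" for r1 b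
  proof (cases "2 \<le> size r1")
    case True
    have "Z r1" using h1 by (simp add: Z_def)
    then show ?thesis using less.hyps[OF h1(2) h1(1) True] h1(4) by blast
  next
    case False
    then obtain a where a: "r1 = Node Leaf a Leaf" using h1(3)
    proof (cases r1)
      case (Node l' a r')
      then have "size r1 = size l' + size r' + 1" by simp
      then have "size l' = 0" "size r' = 0" using False by linarith+
      then have "l' = Leaf \<and> r' = Leaf" using size0 by blast
      then show ?thesis using Node that by simp
    qed (use h1 in simp)
    then show ?thesis using tight_leaf by (intro bexI[of _ r1]) (auto intro: reach.refl)
  qed
  have close: "\<exists>t'\<in>reach t. tightB (ty t') \<and> hd (Dty (ty t')) = s"
    if c: "Node l1 x1 r1 \<in> reach t" "r1 \<noteq> Leaf"
      "l1 \<noteq> Leaf \<longrightarrow> tightB (ty l1) \<and> (Dty (ty l1) = [] \<or> last (Dty (ty l1)) = (\<not> (x1 = Min (set_tree (Node l1 x1 r1)))))"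
      "hd (Dty (ty (Node l1 x1 r1))) = s" for l1 x1 r1
  proof -
    have p: "hr_tree (Node l1 x1 r1)" "shp (Node l1 x1 r1) = shp t" "Z (Node l1 x1 r1)"
      using reach_pres[OF less.prems(1) c(1)] less.prems(3) by auto
    have "size (Node l1 x1 r1) = size t" using size_shp[OF p(2)] .
    then have sz: "size r1 < size t" by simp
    have "0 \<notin> set_tree r1" using Z_right[OF p(1) p(3)] .
    moreover have "hr_tree r1" using p(1) unfolding hr_Node by blast
    ultimately have "\<exists>r2\<in>reach r1. tightB (ty r2) \<and> (Dty (ty r2) = [] \<or> hd (Dty (ty r2)) = (x1 = Min (set_tree (Node l1 x1 r1))))"
      using FR sz c(2) by blast
    then show ?thesis using finish[OF c(1) less.prems(1) c(2) HOL.refl c(3) c(4)] by blast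
  qed
  define m where "m = (x = Min (set_tree (Node l x r)))"
  have tyt: "ty t = Node (ty l) m (ty r)" using t m_def by simp
  have tyr: "ty r \<noteq> Leaf" using r by simp
  have Zt: "Z (Node l x r)" using less.prems t by simp
  have r0: "r \<noteq> Node Leaf 0 Leaf" using Z_right[OF hr Zt] by auto
  have tin: "t \<in> reach t" by (rule reach.refl)
  show ?case
  proof (cases "l = Leaf")
    case True
    have hdt: "hd (Dty (ty t)) = m" using tyt True tyr by simp
    show ?thesis
    proof (cases "m = s")
      case True
      show ?thesis by (rule close[of l x r]) (use tin t r \<open>l = Leaf\<close> hdt True in auto)
    next
      case False
      have x0: "x \<noteq> 0" using less.prems(4) hdt False t by auto
      have tg: "relabel_node l x r \<in> reach t"
        using toggle[of x l r] x0 r r0 \<open>l = Leaf\<close> t by auto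
      obtain y' r' where o: "relabel_node l x r = Node l y' r'" "r' \<noteq> Leaf"
        "(y' = Min (set_tree (Node l y' r'))) = (\<not> m)"
        using relabel_ty_root[OF hr r] m_def by metis
      show ?thesis
        by (rule close[of l y' r']) (use tg o \<open>l = Leaf\<close> False in auto)
    qed
  next
    case lne: False
    show ?thesis
    proof (cases "\<exists>a. l = Node Leaf a Leaf")
      case True
      then obtain a where a: "l = Node Leaf a Leaf" by blast
      have tyl: "ty l = Node Leaf True Leaf" using a by simp
      have hdt: "hd (Dty (ty t)) = (\<not> m)" using tyt tyl tyr by simp
      have P2: "tightB (ty l) \<and> Dty (ty l) = []" using tyl tight_leaf by simp
      show ?thesis
      proof (cases "(\<not> m) = s")
        case True
        show ?thesis by (rule close[of l x r]) (use tin t r lne hdt True P2 m_def in auto)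
      next
        case False
        have a0: "a \<noteq> 0" using less.prems(4) hdt False t a by auto
        have x0: "x \<noteq> 0"
        proof
          assume "x = 0"
          then have "hd (inorder t) = 0" using Zt t by (simp add: Z_def)
          then have "a = 0" using t a by simp
          then show False using a0 by simp
        qed
        have tg: "relabel_node l x r \<in> reach t"
          using toggle[of x l r] x0 r r0 a a0 t by auto
        obtain y' r' where o: "relabel_node l x r = Node l y' r'" "r' \<noteq> Leaf"
          "(y' = Min (set_tree (Node l y' r'))) = (\<not> m)"
          using relabel_ty_root[OF hr r] m_def by metis
        have "hd (Dty (ty (Node l y' r'))) = s"
          using o(2,3) tyl False by (simp del: tree.set) 
        then show ?thesis
          by (intro close[of l y' r']) (use tg o P2 lne in auto)
      qed
    next
      case nsl: False
      have szl: "2 \<le> size l"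
      proof (cases l)
        case (Node l' a r')
        then have "l' \<noteq> Leaf \<or> r' \<noteq> Leaf" using nsl by auto
        then have "size l' \<noteq> 0 \<or> size r' \<noteq> 0" using size0 by blast
        moreover have "size l = size l' + size r' + 1" using Node by simp
        ultimately show ?thesis by linarith
      qed (use lne in simp)
      have Dl: "Dty (ty l) \<noteq> []" using Dty_ty_nil[OF hl lne] nsl by simp
      have hdt: "hd (Dty (ty t)) = hd (Dty (ty l))" using tyt Dl tyr lne by simp
      have hdl: "hd (inorder t) = hd (inorder l)" using t lne by (simp add: hd_inorder_Node)
      have Zl: "Z l" using Zt hdl t by (auto simp: Z_def)
      have "\<exists>l1\<in>reach l. tightB (ty l1) \<and> hd (Dty (ty l1)) = s"
        using less.hyps[of l s] hl szl Zl less.prems(4) hdt t by auto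
      then obtain l1 where l1: "l1 \<in> reach l" "tightB (ty l1)" "hd (Dty (ty l1)) = s" by blast
      have pl: "hr_tree l1" "set_tree l1 = set_tree l" "shp l1 = shp l"
        using reach_pres[OF hl l1(1)] by auto
      have l1ne: "l1 \<noteq> Leaf" using pl(3) lne by (metis shp_Leaf_iff)
      have nsl1: "\<not> (\<exists>a. l1 = Node Leaf a Leaf)"
      proof
        assume "\<exists>a. l1 = Node Leaf a Leaf"
        then obtain a where "l1 = Node Leaf a Leaf" by blast
        then have "shp l = Node Leaf () Leaf" using pl(3) by simp
        then show False using nsl by (cases l) auto
      qed
      have Dl1: "Dty (ty l1) \<noteq> []" using Dty_ty_nil[OF pl(1) l1ne] nsl1 by simp
      have t0: "Node l1 x r \<in> reach t" using reach_lift_l[OF hr l1(1)] t by simp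
      have hr0: "hr_tree (Node l1 x r)" and Z0: "Z (Node l1 x r)"
        using reach_pres[OF less.prems(1) t0] less.prems(3) by auto
      have m0: "(x = Min (set_tree (Node l1 x r))) = m" using pl(2) m_def by simp
      have hd0: "hd (Dty (ty (Node l1 x r))) = s" using Dl1 tyr l1ne l1(3) by simp
      show ?thesis
      proof (cases "last (Dty (ty l1)) = (\<not> m)")
        case True
        show ?thesis by (rule close[of l1 x r]) (use t0 r l1 True m0 hd0 in auto)
      next
        case False
        have x0: "x \<noteq> 0"
        proof
          assume "x = 0"
          then have "hd (inorder (Node l1 x r)) = 0" using Z0 by (simp add: Z_def)
          then have "x \<in> set_tree l1" using hd_inorder_in[OF l1ne] l1ne \<open>x = 0\<close>
            by (simp add: hd_inorder_Node)
          then show False using xl pl(2) by simp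
        qed
        have r00: "r \<noteq> Node Leaf 0 Leaf" using Z_right[OF hr0 Z0] by auto
        have tg: "relabel_node l1 x r \<in> reach t"
          using reach_trans[OF toggle[of x l1 r] t0] x0 r r00 nsl1 by auto
        obtain y' r' where o: "relabel_node l1 x r = Node l1 y' r'" "r' \<noteq> Leaf"
          "(y' = Min (set_tree (Node l1 y' r'))) = (\<not> m)"
          using relabel_ty_root[OF hr0 r] m0 by metis
        have "hd (Dty (ty (Node l1 y' r'))) = s"
          using o(2) Dl1 l1ne l1(3) by simp
        moreover have "last (Dty (ty l1)) = (\<not> (y' = Min (set_tree (Node l1 y' r'))))"
          using o(3) False by simp
        ultimately show ?thesis
          by (intro close[of l1 y' r']) (use tg o l1 l1ne in auto)
      qed
    qed
  qed
qed



lemma length_inorder_size: "length (inorder t) = size t"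
  by (induction t) auto

lemma shp_inorder_len: "shp s = shp t \<Longrightarrow> length (inorder s) = length (inorder t)"
  using size_shp length_inorder_size by metis

lemma reach_word:
  assumes hrT: "hr_tree T" and iT: "inorder T = 0 # \<pi>" and S: "S \<in> reach T"
  shows "inorder S = 0 # tl (inorder S) \<and> length (tl (inorder S)) = length \<pi> \<and> distinct (inorder S)"
proof -
  have ZT: "Z T" using iT by (simp add: Z_def set_inorder[symmetric] del: set_inorder)
  have p: "hr_tree S" "set_tree S = set_tree T" "shp S = shp T" "Z S"
    using reach_pres[OF hrT S] ZT by auto
  have len: "length (inorder S) = length (inorder T)" using shp_inorder_len[OF p(3)] .
  have 0: "0 \<in> set_tree S" using p(2) iT by (simp add: set_inorder[symmetric] del: set_inorder)
  then have "hd (inorder S) = 0" using p(4) by (simp add: Z_def)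
  moreover have "inorder S \<noteq> []" using len iT by auto
  ultimately have "inorder S = 0 # tl (inorder S)" by (metis list.collapse)
  moreover have "distinct (inorder S)" using p(1) by (simp add: hr_tree_def minmax_tree_def)
  ultimately show ?thesis using len iT by simp
qed

lemma orb_eq_reach:
  assumes hrT: "hr_tree T" and iT: "inorder T = 0 # \<pi>" and ln: "length \<pi> = n"
  shows "orb n T = reach T"
proof
  show "orb n T \<subseteq> reach T"
  proof
    fix S assume "S \<in> orb n T"
    then show "S \<in> reach T"
    proof induction
      case base then show ?case by (rule reach.refl)
    next
      case (step S i)
      have w: "inorder S = 0 # tl (inorder S)" "length (tl (inorder S)) = n" "distinct (inorder S)"
        using reach_word[OF hrT iT step(3)] ln by auto
      let ?z = "tl (inorder S) ! (i - 1)"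
      have "i - 1 < n" using step(2) by auto
      then have zin: "?z \<in> set (tl (inorder S))" using w(2) by simp
      then have z0: "?z \<noteq> 0" using w(1) w(3) by (metis distinct.simps(2))
      have zS: "?z \<in> set_tree S" using zin w(1) by (metis list.set_intros(2) set_inorder)
      show ?case unfolding psi_def using reach.step[OF step(3) zS z0] .
    qed
  qed
next
  show "reach T \<subseteq> orb n T"
  proof
    fix S assume "S \<in> reach T"
    then show "S \<in> orb n T"
    proof induction
      case refl then show ?case by (rule orb.base)
    next
      case (step s z)
      have w: "inorder s = 0 # tl (inorder s)" "length (tl (inorder s)) = n"
        using reach_word[OF hrT iT step(1)] ln by auto
      have "z \<in> set (inorder s)" using step(2) by simp
      then have "z \<in> set (tl (inorder s))" using w(1) step(3) by (metis set_ConsD)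
      then obtain j where j: "j < n" "tl (inorder s) ! j = z" using w(2) by (metis in_set_conv_nth)
      have "psi (Suc j) s \<in> orb n T" using orb.step[OF step(4), of "Suc j"] j by simp
      then show ?case using j by (simp add: psi_def)
    qed
  qed
qed

lemma hd_dirs: "\<sigma> \<noteq> [] \<Longrightarrow> hd (dirs (0 # \<sigma>)) = (0 < \<sigma> ! 0)"
  by (cases \<sigma>) auto

theorem mainTheorem10:
  fixes n :: nat and \<pi> :: "int list" and T :: "int tree"
  assumes "n \<ge> 1"
    and "signed_perm n \<pi>"
    and "hr_tree T"
    and "inorder T = 0 # \<pi>"
  shows "(\<forall>S \<in> orb n T. runB (tl (inorder S)) \<ge> leaf_count T)
         \<and> (\<exists>!S. S \<in> orb n T \<and> (0 < tl (inorder S) ! 0 \<longleftrightarrow> 0 < \<pi> ! 0)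
                 \<and> runB (tl (inorder S)) = leaf_count T)"
proof -
  have ln: "length \<pi> = n"
  proof -
    have "length (map abs \<pi>) = card (set (map abs \<pi>))"
      using assms(2) unfolding signed_perm_def by (metis distinct_card)
    also have "\<dots> = card {1..int n}" using assms(2) unfolding signed_perm_def by metis
    also have "\<dots> = n" by simp
    finally show ?thesis by simp
  qed
  have hrT: "hr_tree T" and iT: "inorder T = 0 # \<pi>" using assms by auto
  have orb: "orb n T = reach T" using orb_eq_reach[OF hrT iT ln] .
  have ZT: "Z T" using iT by (simp add: Z_def set_inorder[symmetric] del: set_inorder)
  have facts: "runB (tl (inorder S)) = 1 + chg (Dty (ty S)) \<and> leaf_count (ty S) = leaf_count T
      \<and> wfB (ty S) \<and> ty S \<noteq> Leaf \<and> hd (Dty (ty S)) = (0 < tl (inorder S) ! 0)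
      \<and> hr_tree S \<and> set_tree S = set_tree T \<and> invt S = invt T \<and> shp (ty S) = shp T
      \<and> Dty (ty S) \<noteq> []"
    if S: "S \<in> reach T" for S
  proof -
    have w: "inorder S = 0 # tl (inorder S)" "length (tl (inorder S)) = n" "distinct (inorder S)"
      using reach_word[OF hrT iT S] ln by auto
    have p: "hr_tree S" "set_tree S = set_tree T" "shp S = shp T" "invt S = invt T"
      using reach_pres[OF hrT S] by auto
    have ne: "tl (inorder S) \<noteq> []"
    proof
      assume "tl (inorder S) = []"
      then have "length (tl (inorder S)) = 0" by (simp only: list.size)
      then show False using w(2) assms(1) by linarith
    qed
    have dd: "dirs (inorder S) = Dty (ty S)" using dirs_Dty[OF p(1)] .
    have r: "runB (tl (inorder S)) = 1 + chg (Dty (ty S))"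
      using runB_chg[of "tl (inorder S)"] w(1) w(3) dd by metis
    have lc: "leaf_count (ty S) = leaf_count T"
      using leaf_count_shp[of "ty S" T] shp_ty[of S] p(3) by simp
    have Sne: "S \<noteq> Leaf" using w(1) by auto
    have hd: "hd (Dty (ty S)) = (0 < tl (inorder S) ! 0)"
      using hd_dirs[OF ne] w(1) dd by metis
    have "\<not> (\<exists>a. S = Node Leaf a Leaf)"
    proof
      assume "\<exists>a. S = Node Leaf a Leaf"
      then obtain a where "S = Node Leaf a Leaf" by blast
      then show False using ne by simp
    qed
    then have "Dty (ty S) \<noteq> []" using Dty_ty_nil[OF p(1) Sne] by simp
    then show ?thesis using r lc wfB_ty[OF p(1)] Sne hd p shp_ty[of S] by simp
  qed
  have part1: "\<forall>S \<in> orb n T. runB (tl (inorder S)) \<ge> leaf_count T"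
  proof
    fix S assume "S \<in> orb n T"
    then have f: "runB (tl (inorder S)) = 1 + chg (Dty (ty S))" "leaf_count (ty S) = leaf_count T"
      "wfB (ty S)" "ty S \<noteq> Leaf" using facts orb by auto
    show "runB (tl (inorder S)) \<ge> leaf_count T" using B1[OF f(3) f(4)] f(1) f(2) by simp
  qed
  have tiff: "(runB (tl (inorder S)) = leaf_count T) = tightB (ty S)" if "S \<in> reach T" for S
    using facts[OF that] unfolding tightB_def by auto
  have T_in: "T \<in> reach T" by (rule reach.refl)
  have sz: "2 \<le> size T" using iT assms(1) ln length_inorder_size[of T] by simp
  have hdT: "hd (Dty (ty T)) = (0 < \<pi> ! 0)" using facts[OF T_in] iT by simp
  obtain S where S: "S \<in> reach T" "tightB (ty S)" "hd (Dty (ty S)) = hd (Dty (ty T))"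
    using E[OF hrT sz ZT, of "hd (Dty (ty T))"] by blast
  have ex: "S \<in> orb n T \<and> (0 < tl (inorder S) ! 0 \<longleftrightarrow> 0 < \<pi> ! 0) \<and> runB (tl (inorder S)) = leaf_count T"
    using S orb facts[OF S(1)] hdT tiff[OF S(1)] by simp
  have uniq: "S1 = S2" if a: "S1 \<in> orb n T \<and> (0 < tl (inorder S1) ! 0 \<longleftrightarrow> 0 < \<pi> ! 0) \<and> runB (tl (inorder S1)) = leaf_count T"
    and b: "S2 \<in> orb n T \<and> (0 < tl (inorder S2) ! 0 \<longleftrightarrow> 0 < \<pi> ! 0) \<and> runB (tl (inorder S2)) = leaf_count T" for S1 S2
  proof -
    have r1: "S1 \<in> reach T" and r2: "S2 \<in> reach T" using a b orb by auto
    have t1: "tightB (ty S1)" and t2: "tightB (ty S2)" using tiff[OF r1] tiff[OF r2] a b by auto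
    have f1: "wfB (ty S1)" "hd (Dty (ty S1)) = (0 < tl (inorder S1) ! 0)" "hr_tree S1"
      "set_tree S1 = set_tree T" "invt S1 = invt T" "shp (ty S1) = shp T" "Dty (ty S1) \<noteq> []"
      using facts[OF r1] by auto
    have f2: "wfB (ty S2)" "hd (Dty (ty S2)) = (0 < tl (inorder S2) ! 0)" "hr_tree S2"
      "set_tree S2 = set_tree T" "invt S2 = invt T" "shp (ty S2) = shp T" "Dty (ty S2) \<noteq> []"
      using facts[OF r2] by auto
    have "hd (Dty (ty S1)) = hd (Dty (ty S2))" using f1(2) f2(2) a b by simp
    then have "ty S1 = ty S2" using B2[OF f1(1) f2(1) _ f1(7) t1 t2] f1(6) f2(6) by simp
    then show ?thesis using Inj[OF f1(3) f2(3)] f1 f2 by simp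
  qed
  show ?thesis using part1 ex uniq by blast
qed

end
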